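(* A regular language is $\mathcal{R}$-trivial if and only if it is accepted by an rpoNFA.
   Context: An NFA is $\mathcal{A}=(Q,\Sigma,\cdot,I,F)$ with transition function $\cdot:Q\times\Sigma\to 2^Q$. State $q$ is reachable from $p$ ($p\le q$) if $q\in p\cdot w$ for some word $w$; a poNFA is an NFA for which $\le$ is a partial order. A restricted poNFA (rpoNFA) is a poNFA such that for every state $q$ and symbol $a$, if $q\in q\cdot a$ then $q\cdot a=\{q\}$. For words, $v=a_1\cdots a_n$ is a subsequence of $w$ ($v\preccurlyeq w$) if $w\in\Sigma^*a_1\Sigma^*\cdots\Sigma^*a_n\Sigma^*$; $\mathrm{sub}_k(v)=\{u\mid u\preccurlyeq v,\ |u|\le k\}$; $w_1\sim_k w_2$ iff $\mathrm{sub}_k(w_1)=\mathrm{sub}_k(w_2)$. For $k\ge0$, $x\sim^{\mathcal{R}}_k y$ iff for each prefix $u$ of $x$ there is a prefix $v$ of $y$ with $u\sim_k v$, and for each prefix $v$ of $y$ there is a prefix $u$ of $x$ with $u\sim_k v$. A regular language is $k$-$\mathcal{R}$-trivial if it is a union of $\sim^{\mathcal{R}}_k$-classes, and $\mathcal{R}$-trivial if it is $k$-$\mathcal{R}$-trivial for some $k\ge0$. *)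

theory Defs
  imports Main "HOL-Library.Sublist"
begin

record ('q, 'a) nfa =
  states :: "'q set"
  alphabet :: "'a set"
  delta :: "'q \<Rightarrow> 'a \<Rightarrow> 'q set"
  initial :: "'q set"
  final :: "'q set"

definition wf_nfa :: "('q, 'a) nfa \<Rightarrow> bool" where
  "wf_nfa A \<longleftrightarrow> finite (states A) \<and> finite (alphabet A)
     \<and> initial A \<subseteq> states A \<and> final A \<subseteq> states A
     \<and> (\<forall>q \<in> states A. \<forall>a \<in> alphabet A. delta A q a \<subseteq> states A)"

fun delta_star :: "('q, 'a) nfa \<Rightarrow> 'q \<Rightarrow> 'a list \<Rightarrow> 'q set" where
  "delta_star A q [] = {q}"
| "delta_star A q (a # w) = (\<Union>p \<in> delta A q a. delta_star A p w)"

definition nfa_lang :: "('q, 'a) nfa \<Rightarrow> 'a list set" where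
  "nfa_lang A = {w \<in> lists (alphabet A). \<exists>i \<in> initial A. delta_star A i w \<inter> final A \<noteq> {}}"

definition reach :: "('q, 'a) nfa \<Rightarrow> 'q \<Rightarrow> 'q \<Rightarrow> bool" where
  "reach A p q \<longleftrightarrow> (\<exists>w \<in> lists (alphabet A). q \<in> delta_star A p w)"

text \<open>poNFA: reachability is a partial order on the states (reflexivity and
  transitivity hold automatically, so the condition is antisymmetry).\<close>
definition poNFA :: "('q, 'a) nfa \<Rightarrow> bool" where
  "poNFA A \<longleftrightarrow> wf_nfa A \<and>
     (\<forall>p \<in> states A. \<forall>q \<in> states A. reach A p q \<and> reach A q p \<longrightarrow> p = q)"

definition rpoNFA :: "('q, 'a) nfa \<Rightarrow> bool" where
  "rpoNFA A \<longleftrightarrow> poNFA A \<and>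
     (\<forall>q \<in> states A. \<forall>a \<in> alphabet A. q \<in> delta A q a \<longrightarrow> delta A q a = {q})"

text \<open>Regular languages over a finite alphabet Sigma: accepted by some NFA
  (state set taken, without loss of generality, inside nat).\<close>
definition regular :: "'a set \<Rightarrow> 'a list set \<Rightarrow> bool" where
  "regular \<Sigma> L \<longleftrightarrow> (\<exists>A :: (nat, 'a) nfa. wf_nfa A \<and> alphabet A = \<Sigma> \<and> nfa_lang A = L)"

definition sub_k :: "nat \<Rightarrow> 'a list \<Rightarrow> 'a list set" where
  "sub_k k v = {u. subseq u v \<and> length u \<le> k}"

definition sim_k :: "nat \<Rightarrow> 'a list \<Rightarrow> 'a list \<Rightarrow> bool" where
  "sim_k k w1 w2 \<longleftrightarrow> sub_k k w1 = sub_k k w2"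

definition simR_k :: "nat \<Rightarrow> 'a list \<Rightarrow> 'a list \<Rightarrow> bool" where
  "simR_k k x y \<longleftrightarrow>
     (\<forall>u. prefix u x \<longrightarrow> (\<exists>v. prefix v y \<and> sim_k k u v)) \<and>
     (\<forall>v. prefix v y \<longrightarrow> (\<exists>u. prefix u x \<and> sim_k k u v))"

definition k_R_trivial :: "'a set \<Rightarrow> nat \<Rightarrow> 'a list set \<Rightarrow> bool" where
  "k_R_trivial \<Sigma> k L \<longleftrightarrow> L \<subseteq> lists \<Sigma> \<and>
     (\<forall>x \<in> lists \<Sigma>. \<forall>y \<in> lists \<Sigma>. simR_k k x y \<longrightarrow> (x \<in> L \<longleftrightarrow> y \<in> L))"

definition R_trivial :: "'a set \<Rightarrow> 'a list set \<Rightarrow> bool" where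
  "R_trivial \<Sigma> L \<longleftrightarrow> (\<exists>k. k_R_trivial \<Sigma> k L)"

end

theory Submission
  imports Defs
begin


lemma simR_sym: "simR_k k x y \<Longrightarrow> simR_k k y x"
  unfolding simR_k_def sim_k_def by metis

lemma sub_set: assumes "sub_k (Suc k) x = sub_k (Suc k) y" shows "set x = set y"
proof -
  have h: "\<And>x c. c \<in> set x \<longleftrightarrow> [c] \<in> sub_k (Suc k) x" by (simp add: sub_k_def subseq_singleton_left)
  show ?thesis
  proof (rule set_eqI)
    fix c show "c \<in> set x \<longleftrightarrow> c \<in> set y" using assms h[of c x] h[of c y] by simp
  qed
qed

lemma simR_set: assumes "simR_k (Suc k) x y" shows "set x \<subseteq> set y"
proof -
  from assms obtain v where v: "prefix v y" "sub_k (Suc k) x = sub_k (Suc k) v"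
    unfolding simR_k_def sim_k_def by blast
  then show ?thesis using sub_set[OF v(2)] set_mono_prefix by blast
qed

lemma subseq_skip: "a \<notin> set u \<Longrightarrow> subseq (a # s) (u @ a # p) \<longleftrightarrow> subseq s p"
  by (induction u) auto

lemma prefix_split_a:
  assumes "prefix z (u' @ a # v')" "a \<in> set z" "a \<notin> set u'"
  shows "\<exists>p'. z = u' @ a # p' \<and> prefix p' v'"
proof -
  from assms(1) have "prefix z u' \<or> (\<exists>r. z = u' @ r \<and> prefix r (a # v'))"
    by (simp add: prefix_append)
  moreover have "\<not> prefix z u'"
    using set_mono_prefix assms(2,3) by fastforce
  ultimately obtain r where r: "z = u' @ r" "prefix r (a # v')" by blast
  then have "r \<noteq> []" using assms(2,3) by auto
  then show ?thesis using r by (cases r) auto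
qed

lemma first_letter_eq:
  assumes "simR_k (Suc k) (u @ a # v) (u' @ b # v')" "set u \<subseteq> S" "a \<notin> S" "set u' \<subseteq> S" "b \<notin> S"
  shows "a = b"
proof -
  have "prefix (u @ [a]) (u @ a # v)" by simp
  with assms(1) obtain z where z: "prefix z (u' @ b # v')" "sub_k (Suc k) (u @ [a]) = sub_k (Suc k) z"
    unfolding simR_k_def sim_k_def by blast
  have sz: "set z = set (u @ [a])" using sub_set[OF z(2)] by simp
  from z(1) have "prefix z u' \<or> (\<exists>r. z = u' @ r \<and> prefix r (b # v'))"
    by (simp add: prefix_append)
  moreover have "\<not> prefix z u'"
    using set_mono_prefix sz assms(3,4) by fastforce
  ultimately obtain r where r: "z = u' @ r" "prefix r (b # v')" by blast
  have "r \<noteq> []" using r(1) sz assms(3,4) by auto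
  then have "b \<in> set z" using r by (cases r) auto
  then show ?thesis using sz assms(2,5) by auto
qed

lemma half_tail:
  assumes "simR_k (Suc k) (u @ a # v) (u' @ a # v')" "a \<notin> set u" "a \<notin> set u'" "prefix p v"
  shows "\<exists>p'. prefix p' v' \<and> sim_k k p p'"
proof -
  have "prefix (u @ a # p) (u @ a # v)" using assms(4) by simp
  with assms(1) obtain z where z: "prefix z (u' @ a # v')" "sub_k (Suc k) (u @ a # p) = sub_k (Suc k) z"
    unfolding simR_k_def sim_k_def by blast
  have "set z = set (u @ a # p)" using sub_set[OF z(2)] by simp
  then have "a \<in> set z" by simp
  then obtain p' where p': "z = u' @ a # p'" "prefix p' v'" using prefix_split_a[OF z(1) _ assms(3)] by blast
  have "sub_k k p = sub_k k p'"
  proof (intro set_eqI iffI)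
    fix s assume "s \<in> sub_k k p"
    then have "a # s \<in> sub_k (Suc k) (u @ a # p)" using subseq_skip[OF assms(2)] by (simp add: sub_k_def)
    then have "a # s \<in> sub_k (Suc k) z" using z(2) by simp
    then show "s \<in> sub_k k p'" using subseq_skip[OF assms(3)] p'(1) by (simp add: sub_k_def)
  next
    fix s assume "s \<in> sub_k k p'"
    then have "a # s \<in> sub_k (Suc k) z" using subseq_skip[OF assms(3)] p'(1) by (simp add: sub_k_def)
    then have "a # s \<in> sub_k (Suc k) (u @ a # p)" using z(2) by simp
    then show "s \<in> sub_k k p" using subseq_skip[OF assms(2)] by (simp add: sub_k_def)
  qed
  then show ?thesis using p' sim_k_def by blast
qed

lemma tail_sim:
  assumes "simR_k (Suc k) (u @ a # v) (u' @ a # v')" "a \<notin> set u" "a \<notin> set u'"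
  shows "simR_k k v v'"
proof -
  have 1: "\<forall>p. prefix p v \<longrightarrow> (\<exists>p'. prefix p' v' \<and> sim_k k p p')"
    using half_tail[OF assms] by blast
  have 2: "\<forall>p. prefix p v' \<longrightarrow> (\<exists>p'. prefix p' v \<and> sim_k k p p')"
    using half_tail[OF simR_sym[OF assms(1)] assms(3,2)] by blast
  have 3: "\<forall>p. prefix p v' \<longrightarrow> (\<exists>p'. prefix p' v \<and> sim_k k p' p)"
    using 2 unfolding sim_k_def by metis
  show ?thesis using 1 3 unfolding simR_k_def by blast
qed

lemma delta_star_append:
  "delta_star A q (u @ w) = (\<Union>p \<in> delta_star A q u. delta_star A p w)"
  by (induction u arbitrary: q) auto

lemma delta_star_states:
  "wf_nfa A \<Longrightarrow> q \<in> states A \<Longrightarrow> w \<in> lists (alphabet A) \<Longrightarrow> delta_star A q w \<subseteq> states A"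
proof (induction w arbitrary: q)
  case Nil then show ?case by simp
next
  case (Cons a w)
  have "\<And>p. p \<in> delta A q a \<Longrightarrow> p \<in> states A"
  proof -
    fix p assume "p \<in> delta A q a"
    moreover have "delta A q a \<subseteq> states A" using Cons.prems unfolding wf_nfa_def by simp
    ultimately show "p \<in> states A" by blast
  qed
  then show ?case using Cons by auto
qed

lemma delta_star_stay:
  "\<forall>c\<in>set w. delta A q c = {q} \<Longrightarrow> delta_star A q w = {q}"
  by (induction w) auto

lemma reach_refl: "reach A q q"
  unfolding reach_def by (rule bexI[of _ "[]"]) auto

lemma reach_step:
  assumes "reach A q p" "a \<in> alphabet A" "p' \<in> delta A p a"
  shows "reach A q p'"
proof -
  obtain w where w: "w \<in> lists (alphabet A)" "p \<in> delta_star A q w" using assms(1) unfolding reach_def by blast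
  have "p' \<in> delta_star A q (w @ [a])" using w assms(3) by (auto simp: delta_star_append)
  then show ?thesis unfolding reach_def using w assms(2) by (intro bexI[of _ "w @ [a]"]) auto
qed

lemma reach_trans:
  assumes "reach A p q" "reach A q r" shows "reach A p r"
proof -
  obtain w where w: "w \<in> lists (alphabet A)" "q \<in> delta_star A p w" using assms(1) unfolding reach_def by blast
  obtain w' where w': "w' \<in> lists (alphabet A)" "r \<in> delta_star A q w'" using assms(2) unfolding reach_def by blast
  have "r \<in> delta_star A p (w @ w')" using w w' by (auto simp: delta_star_append)
  then show ?thesis unfolding reach_def using w w' by (intro bexI[of _ "w @ w'"]) auto
qed

definition acc :: "('q, 'a) nfa \<Rightarrow> 'q \<Rightarrow> 'a list \<Rightarrow> bool" where
  "acc A q w \<longleftrightarrow> delta_star A q w \<inter> final A \<noteq> {}"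

lemma rpo_main:
  assumes rpo: "rpoNFA A"
  shows "\<forall>q\<in>states A. card {p\<in>states A. reach A q p} \<le> k \<longrightarrow>
     (\<forall>x\<in>lists (alphabet A). \<forall>y\<in>lists (alphabet A). simR_k k x y \<longrightarrow> (acc A q x \<longleftrightarrow> acc A q y))"
proof (induction k)
  case 0
  show ?case
  proof (intro ballI impI)
    fix q x y assume q: "q \<in> states A" and c: "card {p\<in>states A. reach A q p} \<le> 0"
    have "finite (states A)" using rpo by (simp add: rpoNFA_def poNFA_def wf_nfa_def)
    then have f: "finite {p\<in>states A. reach A q p}" by simp
    have "q \<in> {p\<in>states A. reach A q p}" using q reach_refl by fast
    then have "card {p\<in>states A. reach A q p} > 0" using f card_gt_0_iff by blast
    then show "acc A q x \<longleftrightarrow> acc A q y" using c by simp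
  qed
next
  case (Suc k)
  have wf: "wf_nfa A" and fin: "finite (states A)"
    and anti: "\<And>p q. p \<in> states A \<Longrightarrow> q \<in> states A \<Longrightarrow> reach A p q \<Longrightarrow> reach A q p \<Longrightarrow> p = q"
    and loop: "\<And>q a. q \<in> states A \<Longrightarrow> a \<in> alphabet A \<Longrightarrow> q \<in> delta A q a \<Longrightarrow> delta A q a = {q}"
    using rpo by (auto simp: rpoNFA_def poNFA_def wf_nfa_def)
  show ?case
  proof (intro ballI impI)
    fix q x y assume q: "q \<in> states A" and c: "card {p\<in>states A. reach A q p} \<le> Suc k"
      and x: "x \<in> lists (alphabet A)" and y: "y \<in> lists (alphabet A)" and s: "simR_k (Suc k) x y"
    define S where "S = {c. delta A q c = {q}}"
    have sxy: "set x = set y" using simR_set[OF s] simR_set[OF simR_sym[OF s]] by blast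
    show "acc A q x \<longleftrightarrow> acc A q y"
    proof (cases "\<forall>c\<in>set x. c \<in> S")
      case True
      then have "\<forall>c\<in>set y. c \<in> S" using sxy by simp
      then show ?thesis using True delta_star_stay[of x A q] delta_star_stay[of y A q] by (simp add: S_def acc_def)
    next
      case False
      then obtain u a v where xs: "x = u @ a # v" "a \<notin> S" "\<forall>c\<in>set u. c \<in> S"
        using split_list_first_prop[of x "\<lambda>c. c \<notin> S"] by blast
      have "\<exists>c\<in>set y. c \<notin> S" using False sxy by simp
      then obtain u' b v' where ys: "y = u' @ b # v'" "b \<notin> S" "\<forall>c\<in>set u'. c \<in> S"
        using split_list_first_prop[of y "\<lambda>c. c \<notin> S"] by blast
      have ab: "a = b" using first_letter_eq[of k u a v u' b v' S] s xs ys by auto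
      have au: "a \<notin> set u" "a \<notin> set u'" using xs ys ab by auto
      have vv: "simR_k k v v'" using tail_sim[of k u a v u' v'] s xs ys ab au by simp
      have aA: "a \<in> alphabet A" using x xs by simp
      have v: "v \<in> lists (alphabet A)" "v' \<in> lists (alphabet A)" using x y xs ys by auto
      have dx: "delta_star A q x = (\<Union>p \<in> delta A q a. delta_star A p v)"
        using xs delta_star_stay[of u A q] by (simp add: delta_star_append S_def)
      have dy: "delta_star A q y = (\<Union>p \<in> delta A q a. delta_star A p v')"
        using ys ab delta_star_stay[of u' A q] by (simp add: delta_star_append S_def)
      have IHp: "acc A p v \<longleftrightarrow> acc A p v'" if p: "p \<in> delta A q a" for p
      proof -
        have pS: "p \<in> states A" using wf q aA p unfolding wf_nfa_def by blast
        have "delta A q a \<noteq> {q}" using xs(2) S_def by simp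
        then have "q \<notin> delta A q a" using loop[OF q aA] by metis
        then have pq: "p \<noteq> q" using p by blast
        have sub: "{r\<in>states A. reach A p r} \<subseteq> {r\<in>states A. reach A q r}"
        proof
          fix r assume "r \<in> {r\<in>states A. reach A p r}"
          then show "r \<in> {r\<in>states A. reach A q r}"
            using reach_trans[OF reach_step[OF reach_refl aA p]] by simp
        qed
        have "q \<notin> {r\<in>states A. reach A p r}"
          using anti[OF pS q] reach_step[OF reach_refl aA p] pq by blast
        moreover have "q \<in> {r\<in>states A. reach A q r}" using q reach_refl by fast
        ultimately have "{r\<in>states A. reach A p r} \<subset> {r\<in>states A. reach A q r}" using sub by blast
        then have "card {r\<in>states A. reach A p r} < card {r\<in>states A. reach A q r}"
          using fin by (intro psubset_card_mono) auto
        then have "card {r\<in>states A. reach A p r} \<le> k" using c by simp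
        then show ?thesis using Suc.IH[rule_format, OF pS _ v vv] by blast
      qed
      show ?thesis unfolding acc_def dx dy using IHp unfolding acc_def by blast
    qed
  qed
qed

lemma rpo_R_trivial:
  assumes "rpoNFA A"
  shows "R_trivial (alphabet A) (nfa_lang A)"
proof -
  have fin: "finite (states A)" and ini: "initial A \<subseteq> states A"
    using assms by (auto simp: rpoNFA_def poNFA_def wf_nfa_def)
  have "\<forall>q\<in>states A. card {p\<in>states A. reach A q p} \<le> card (states A)"
    using fin by (auto intro: card_mono)
  then have m: "\<And>q x y. q \<in> states A \<Longrightarrow> x \<in> lists (alphabet A) \<Longrightarrow> y \<in> lists (alphabet A) \<Longrightarrow>
      simR_k (card (states A)) x y \<Longrightarrow> acc A q x \<longleftrightarrow> acc A q y"
    using rpo_main[OF assms, of "card (states A)"] by blast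
  have "k_R_trivial (alphabet A) (card (states A)) (nfa_lang A)"
    unfolding k_R_trivial_def
  proof (intro conjI ballI impI)
    show "nfa_lang A \<subseteq> lists (alphabet A)" by (auto simp: nfa_lang_def)
    fix x y assume x: "x \<in> lists (alphabet A)" and y: "y \<in> lists (alphabet A)"
      and s: "simR_k (card (states A)) x y"
    have "\<And>i. i \<in> initial A \<Longrightarrow> acc A i x \<longleftrightarrow> acc A i y" using m ini x y s by blast
    then show "x \<in> nfa_lang A \<longleftrightarrow> y \<in> nfa_lang A" using x y by (auto simp: nfa_lang_def acc_def)
  qed
  then show ?thesis unfolding R_trivial_def by blast
qed



lemma subseq_set_sub: assumes "subseq s u" shows "set s \<subseteq> set u"
proof
  fix c assume "c \<in> set s"
  then have "subseq [c] s" by (simp add: subseq_singleton_left)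
  then have "subseq [c] u" by (rule subseq_order.trans[OF _ assms])
  then show "c \<in> set u" by (simp add: subseq_singleton_left)
qed

lemma subseq_single: "subseq s [a] \<longleftrightarrow> s = [] \<or> s = [a]"
  by (cases s) (auto simp: subseq_Cons2_iff)

definition gk :: "nat \<Rightarrow> 'a list set \<Rightarrow> 'a \<Rightarrow> 'a list set" where
  "gk k T a = T \<union> {s @ [a] | s. s \<in> T \<and> length s < k}"

lemma sub_snoc: "sub_k k (x @ [a]) = gk k (sub_k k x) a"
proof (intro set_eqI iffI)
  fix s assume "s \<in> sub_k k (x @ [a])"
  then have sx: "subseq s (x @ [a])" and len: "length s \<le> k" unfolding sub_k_def by blast+
  from sx obtain s1 s2 where s: "s = s1 @ s2" "subseq s1 x" "subseq s2 [a]" by (rule subseq_appendE)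
  have "s2 = [] \<or> s2 = [a]" using s(3) by (simp only: subseq_single)
  then show "s \<in> gk k (sub_k k x) a"
  proof
    assume "s2 = []"
    then have "s = s1" using s(1) by simp
    then have "s \<in> sub_k k x" unfolding sub_k_def using s(2) len by blast
    then show ?thesis unfolding gk_def by blast
  next
    assume "s2 = [a]"
    then have e: "s = s1 @ [a]" using s(1) by simp
    then have "length s1 < k" using len by simp
    moreover have "s1 \<in> sub_k k x" unfolding sub_k_def using s(2) \<open>length s1 < k\<close> by simp
    ultimately show ?thesis unfolding gk_def using e by blast
  qed
next
  fix s assume "s \<in> gk k (sub_k k x) a"
  then consider "s \<in> sub_k k x" | s1 where "s = s1 @ [a]" "s1 \<in> sub_k k x" "length s1 < k"
    unfolding gk_def by blast
  then show "s \<in> sub_k k (x @ [a])"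
  proof cases
    case 1
    then have "subseq s x" "length s \<le> k" unfolding sub_k_def by blast+
    then show ?thesis unfolding sub_k_def using subseq_rev_drop_many by blast
  next
    case 2
    then have "subseq s1 x" "length s1 < k" unfolding sub_k_def by blast+
    then have "subseq (s1 @ [a]) (x @ [a])" "length (s1 @ [a]) \<le> k"
      using subseq_append[of s1 "[a]" x] by simp_all
    then show ?thesis unfolding sub_k_def using 2(1) by blast
  qed
qed

definition Pk :: "nat \<Rightarrow> 'a list \<Rightarrow> 'a list set set" where
  "Pk k x = {sub_k k u | u. prefix u x}"

lemma sub_mono: "prefix u x \<Longrightarrow> sub_k k u \<subseteq> sub_k k x"
  unfolding sub_k_def using prefix_imp_subseq subseq_order.trans by blast

lemma Union_Pk: "\<Union>(Pk k x) = sub_k k x"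
proof
  show "\<Union>(Pk k x) \<subseteq> sub_k k x" unfolding Pk_def using sub_mono by blast
  show "sub_k k x \<subseteq> \<Union>(Pk k x)" unfolding Pk_def by blast
qed

lemma Pk_snoc: "Pk k (x @ [a]) = insert (sub_k k (x @ [a])) (Pk k x)"
  unfolding Pk_def by (auto simp: prefix_snoc)

lemma Pk_mono: "Pk k x \<subseteq> Pk k (x @ w)"
  unfolding Pk_def by (auto intro: prefix_order.trans)

lemma Pk_sim: "Pk k x = Pk k y \<Longrightarrow> simR_k k x y"
proof -
  assume e: "Pk k x = Pk k y"
  have 1: "\<exists>v. prefix v y \<and> sim_k k u v" if "prefix u x" for u
  proof -
    have "sub_k k u \<in> Pk k y" using e that unfolding Pk_def by blast
    then show ?thesis unfolding Pk_def sim_k_def by auto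
  qed
  have 2: "\<exists>u. prefix u x \<and> sim_k k u v" if "prefix v y" for v
  proof -
    have "sub_k k v \<in> Pk k x" using e that unfolding Pk_def by blast
    then show ?thesis unfolding Pk_def sim_k_def by auto
  qed
  show ?thesis unfolding simR_k_def using 1 2 by blast
qed

definition Dk :: "'a set \<Rightarrow> nat \<Rightarrow> 'a list set \<Rightarrow> ('a list set set, 'a) nfa" where
  "Dk \<Sigma> k L = \<lparr>states = Pk k ` lists \<Sigma>, alphabet = \<Sigma>,
     delta = (\<lambda>S a. {insert (gk k (\<Union>S) a) S}), initial = {Pk k []}, final = Pk k ` L\<rparr>"

lemma Dk_delta: "delta (Dk \<Sigma> k L) (Pk k x) a = {Pk k (x @ [a])}"
  by (simp add: Dk_def Union_Pk Pk_snoc sub_snoc)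

lemma Dk_star: "delta_star (Dk \<Sigma> k L) (Pk k x) w = {Pk k (x @ w)}"
proof (induction w arbitrary: x)
  case Nil then show ?case by simp
next
  case (Cons a w)
  have "delta_star (Dk \<Sigma> k L) (Pk k x) (a # w) = delta_star (Dk \<Sigma> k L) (Pk k (x @ [a])) w"
    by (simp add: Dk_delta)
  also have "\<dots> = {Pk k (x @ a # w)}" using Cons.IH[of "x @ [a]"] by simp
  finally show ?case .
qed

lemma Dk_rpo:
  assumes fin: "finite \<Sigma>" and kr: "k_R_trivial \<Sigma> k L"
  shows "rpoNFA (Dk \<Sigma> k L) \<and> alphabet (Dk \<Sigma> k L) = \<Sigma> \<and> nfa_lang (Dk \<Sigma> k L) = L"
proof -
  let ?D = "Dk \<Sigma> k L"
  have Lsub: "L \<subseteq> lists \<Sigma>" using kr by (simp add: k_R_trivial_def)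
  define B where "B = {xs. set xs \<subseteq> \<Sigma> \<and> length xs \<le> k}"
  have "Pk k x \<subseteq> Pow B" if "x \<in> lists \<Sigma>" for x
  proof
    fix T assume "T \<in> Pk k x"
    then obtain u where u: "T = sub_k k u" "prefix u x" unfolding Pk_def by blast
    have "set u \<subseteq> \<Sigma>" using u(2) that set_mono_prefix by fastforce
    then show "T \<in> Pow B" using u(1) subseq_set_sub unfolding B_def sub_k_def by fastforce
  qed
  then have "states ?D \<subseteq> Pow (Pow B)" by (auto simp: Dk_def)
  moreover have "finite (Pow (Pow B))" using finite_lists_length_le[OF fin] B_def by simp
  ultimately have finS: "finite (states ?D)" by (rule finite_subset)
  have wf: "wf_nfa ?D"
    unfolding wf_nfa_def
  proof (intro conjI ballI)
    show "finite (states ?D)" by (rule finS)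
    show "finite (alphabet ?D)" using fin by (simp add: Dk_def)
    show "initial ?D \<subseteq> states ?D" by (auto simp: Dk_def)
    show "final ?D \<subseteq> states ?D" using Lsub by (auto simp: Dk_def)
    fix q a assume q: "q \<in> states ?D" and a: "a \<in> alphabet ?D"
    then obtain x where x: "q = Pk k x" "x \<in> lists \<Sigma>" by (auto simp: Dk_def)
    have "Pk k (x @ [a]) \<in> states ?D" using x a by (auto simp: Dk_def)
    then show "delta ?D q a \<subseteq> states ?D" using x(1) Dk_delta[of \<Sigma> k L x a] by simp
  qed
  have reach_sub: "S \<subseteq> T" if SS: "S \<in> states ?D" and RR: "reach ?D S T" for S T
  proof -
    have "S \<in> Pk k ` lists \<Sigma>" using SS by (simp add: Dk_def)
    then obtain x where x: "S = Pk k x" by blast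
    obtain w where "T \<in> delta_star ?D S w" using RR unfolding reach_def by blast
    then have "T = Pk k (x @ w)" using x Dk_star[of \<Sigma> k L x w] by simp
    then show ?thesis using x Pk_mono by simp
  qed
  have po: "poNFA ?D" unfolding poNFA_def using wf reach_sub by blast
  have rpo: "rpoNFA ?D" unfolding rpoNFA_def using po by (simp add: Dk_def)
  have lang: "nfa_lang ?D = L"
  proof (intro set_eqI iffI)
    fix w assume "w \<in> nfa_lang ?D"
    then have w: "w \<in> lists \<Sigma>" and "Pk k w \<in> Pk k ` L"
      unfolding nfa_lang_def using Dk_star[of \<Sigma> k L "[]"] by (auto simp: Dk_def)
    then obtain y where y: "y \<in> L" "Pk k w = Pk k y" by blast
    then show "w \<in> L" using kr w Lsub Pk_sim unfolding k_R_trivial_def by blast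
  next
    fix w assume "w \<in> L"
    then show "w \<in> nfa_lang ?D" using Lsub Dk_star[of \<Sigma> k L "[]"]
      unfolding nfa_lang_def by (auto simp: Dk_def)
  qed
  show ?thesis using rpo lang by (simp add: Dk_def)
qed


lemma rename_nfa:
  fixes A :: "('q, 'a) nfa" and f :: "'q \<Rightarrow> 'r"
  assumes rpo: "rpoNFA A" and inj: "inj_on f (states A)"
  shows "\<exists>B :: ('r, 'a) nfa. rpoNFA B \<and> alphabet B = alphabet A \<and> nfa_lang B = nfa_lang A"
proof -
  let ?Q = "states A"
  define B :: "('r, 'a) nfa" where "B = \<lparr>states = f ` ?Q, alphabet = alphabet A,
     delta = (\<lambda>q a. f ` delta A (the_inv_into ?Q f q) a), initial = f ` initial A, final = f ` final A\<rparr>"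
  have wf: "wf_nfa A" and anti: "\<And>p q. p \<in> ?Q \<Longrightarrow> q \<in> ?Q \<Longrightarrow> reach A p q \<Longrightarrow> reach A q p \<Longrightarrow> p = q"
    and loop: "\<And>q a. q \<in> ?Q \<Longrightarrow> a \<in> alphabet A \<Longrightarrow> q \<in> delta A q a \<Longrightarrow> delta A q a = {q}"
    using rpo unfolding rpoNFA_def poNFA_def by blast+
  have dsub: "\<And>q a. q \<in> ?Q \<Longrightarrow> a \<in> alphabet A \<Longrightarrow> delta A q a \<subseteq> ?Q"
    using wf unfolding wf_nfa_def by blast
  have dB: "delta B (f q) a = f ` delta A q a" if "q \<in> ?Q" for q a
    using the_inv_into_f_f[OF inj that] by (simp add: B_def)
  have star: "delta_star B (f q) w = f ` delta_star A q w" if "q \<in> ?Q" "w \<in> lists (alphabet A)" for q w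
    using that
  proof (induction w arbitrary: q)
    case Nil then show ?case by simp
  next
    case (Cons a w)
    have a: "a \<in> alphabet A" and w: "w \<in> lists (alphabet A)" using Cons.prems by auto
    have "delta_star B (f q) (a # w) = (\<Union>p' \<in> f ` delta A q a. delta_star B p' w)"
      using dB[OF Cons.prems(1)] by simp
    also have "\<dots> = (\<Union>p \<in> delta A q a. delta_star B (f p) w)" by simp
    also have "\<dots> = (\<Union>p \<in> delta A q a. f ` delta_star A p w)"
      using Cons.IH[OF _ w] dsub[OF Cons.prems(1) a] by (intro SUP_cong) auto
    also have "\<dots> = f ` delta_star A q (a # w)" by (simp add: image_UN)
    finally show ?case .
  qed
  have starQ: "delta_star A q w \<subseteq> ?Q" if "q \<in> ?Q" "w \<in> lists (alphabet A)" for q w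
    using delta_star_states[OF wf that] .
  have reachB: "reach B (f p) (f q) \<longleftrightarrow> reach A p q" if "p \<in> ?Q" "q \<in> ?Q" for p q
  proof -
    have "\<And>w. w \<in> lists (alphabet A) \<Longrightarrow> f q \<in> delta_star B (f p) w \<longleftrightarrow> q \<in> delta_star A p w"
      using star[OF that(1)] starQ[OF that(1)] inj that(2) by (simp add: inj_on_image_mem_iff)
    then show ?thesis unfolding reach_def by (simp add: B_def)
  qed
  have wfB: "wf_nfa B"
    unfolding wf_nfa_def
  proof (intro conjI ballI)
    show "finite (states B)" using wf by (simp add: B_def wf_nfa_def)
    show "finite (alphabet B)" using wf by (simp add: B_def wf_nfa_def)
    show "initial B \<subseteq> states B" using wf by (auto simp: B_def wf_nfa_def)
    show "final B \<subseteq> states B" using wf by (auto simp: B_def wf_nfa_def)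
    fix q' a assume q': "q' \<in> states B" and a: "a \<in> alphabet B"
    then obtain q where q: "q \<in> ?Q" "q' = f q" by (auto simp: B_def)
    have aA: "a \<in> alphabet A" using a by (simp add: B_def)
    have "delta B q' a = f ` delta A q a" using q dB by simp
    then show "delta B q' a \<subseteq> states B" using dsub[OF q(1) aA] by (auto simp: B_def)
  qed
  have poB: "poNFA B" unfolding poNFA_def
  proof (intro conjI ballI impI)
    show "wf_nfa B" by (rule wfB)
    fix p' q' assume p': "p' \<in> states B" and q': "q' \<in> states B" and r: "reach B p' q' \<and> reach B q' p'"
    obtain p where p: "p \<in> ?Q" "p' = f p" using p' by (auto simp: B_def)
    obtain q where q: "q \<in> ?Q" "q' = f q" using q' by (auto simp: B_def)
    have "reach A p q" "reach A q p" using r reachB p q by auto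
    then have "p = q" using anti p(1) q(1) by blast
    then show "p' = q'" using p q by simp
  qed
  have rpoB: "rpoNFA B" unfolding rpoNFA_def
  proof (intro conjI ballI impI)
    show "poNFA B" by (rule poB)
    fix q' a assume q': "q' \<in> states B" and a: "a \<in> alphabet B" and l: "q' \<in> delta B q' a"
    obtain q where q: "q \<in> ?Q" "q' = f q" using q' by (auto simp: B_def)
    have aA: "a \<in> alphabet A" using a by (simp add: B_def)
    have "f q \<in> f ` delta A q a" using l q dB by simp
    then have "q \<in> delta A q a" using inj q(1) dsub[OF q(1) aA] by (simp add: inj_on_image_mem_iff)
    then have "delta A q a = {q}" using loop q(1) aA by blast
    then show "delta B q' a = {q'}" using q dB by simp
  qed
  have langB: "nfa_lang B = nfa_lang A"
  proof (intro set_eqI)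
    fix w
    show "w \<in> nfa_lang B \<longleftrightarrow> w \<in> nfa_lang A"
    proof (cases "w \<in> lists (alphabet A)")
      case False then show ?thesis by (simp add: nfa_lang_def B_def)
    next
      case True
      have "\<And>i. i \<in> initial A \<Longrightarrow> (delta_star B (f i) w \<inter> final B \<noteq> {}) \<longleftrightarrow> (delta_star A i w \<inter> final A \<noteq> {})"
      proof -
        fix i assume i: "i \<in> initial A"
        then have iQ: "i \<in> ?Q" using wf by (auto simp: wf_nfa_def)
        have FQ: "final A \<subseteq> ?Q" using wf by (simp add: wf_nfa_def)
        have "delta_star B (f i) w \<inter> final B = f ` (delta_star A i w \<inter> final A)"
          using star[OF iQ True] starQ[OF iQ True] FQ inj_on_image_Int[OF inj] by (simp add: B_def)
        then show "(delta_star B (f i) w \<inter> final B \<noteq> {}) \<longleftrightarrow> (delta_star A i w \<inter> final A \<noteq> {})" by simp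
      qed
      then show ?thesis using True by (auto simp: nfa_lang_def B_def)
    qed
  qed
  show ?thesis using rpoB langB by (intro exI[of _ B]) (simp add: B_def)
qed

theorem theorem3:
  fixes \<Sigma> :: "'a set" and L :: "'a list set"
  assumes "finite \<Sigma>" and "regular \<Sigma> L"
  shows "R_trivial \<Sigma> L \<longleftrightarrow>
           (\<exists>A :: (nat, 'a) nfa. rpoNFA A \<and> alphabet A = \<Sigma> \<and> nfa_lang A = L)"
proof
  assume "R_trivial \<Sigma> L"
  then obtain k where k: "k_R_trivial \<Sigma> k L" unfolding R_trivial_def by blast
  have D: "rpoNFA (Dk \<Sigma> k L)" "alphabet (Dk \<Sigma> k L) = \<Sigma>" "nfa_lang (Dk \<Sigma> k L) = L"
    using Dk_rpo[OF assms(1) k] by auto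
  have "finite (states (Dk \<Sigma> k L))" using D(1) by (simp add: rpoNFA_def poNFA_def wf_nfa_def)
  then obtain f :: "'a list set set \<Rightarrow> nat" and n where "inj_on f (states (Dk \<Sigma> k L))"
    using finite_imp_inj_to_nat_seg by blast
  from rename_nfa[OF D(1) this] show "\<exists>A :: (nat, 'a) nfa. rpoNFA A \<and> alphabet A = \<Sigma> \<and> nfa_lang A = L"
    using D by auto
next
  assume "\<exists>A :: (nat, 'a) nfa. rpoNFA A \<and> alphabet A = \<Sigma> \<and> nfa_lang A = L"
  then obtain A :: "(nat, 'a) nfa" where A: "rpoNFA A" "alphabet A = \<Sigma>" "nfa_lang A = L" by blast
  show "R_trivial \<Sigma> L" using rpo_R_trivial[OF A(1)] A by simp
qed

end
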